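(* Let $S$ be either $\mathbb{Z}[j]=\{a+bj: a,b\in\mathbb{Z}\}$ or the Lipschitz order $\{r+sj: r,s\in\mathbb{Z}[i]\}=\{a+bi+cj+dk: a,b,c,d\in\mathbb{Z}\}$ in the Hamilton quaternions. Whenever $y,t\in S$ satisfy that $|y|^2$ divides $|t|^2$ in $\mathbb{Z}$, there exist $u,v\in S$ with $t=uv$ and $|u|^2=|y|^2$.
   Context: $|q|^2=q\overline{q}=a^2+b^2+c^2+d^2$ for $q=a+bi+cj+dk\in\mathbb{H}$. *)

theory Defs
  imports Main
begin

datatype iquat = IQ (qre: int) (qi: int) (qj: int) (qk: int)

text \<open>Hamilton product (i^2 = j^2 = k^2 = ijk = -1).\<close>
definition qmult :: "iquat \<Rightarrow> iquat \<Rightarrow> iquat" where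
  "qmult p q = IQ
     (qre p * qre q - qi p * qi q - qj p * qj q - qk p * qk q)
     (qre p * qi q + qi p * qre q + qj p * qk q - qk p * qj q)
     (qre p * qj q - qi p * qk q + qj p * qre q + qk p * qi q)
     (qre p * qk q + qi p * qj q - qj p * qi q + qk p * qre q)"

definition qnorm2 :: "iquat \<Rightarrow> int" where
  "qnorm2 q = (qre q)^2 + (qi q)^2 + (qj q)^2 + (qk q)^2"

definition Lipschitz :: "iquat set" where
  "Lipschitz = UNIV"

definition Zj :: "iquat set" where
  "Zj = {q. qi q = 0 \<and> qk q = 0}"

end

theory Submission
  imports Defs "HOL-Computational_Algebra.Primes"
begin

definition qconj :: "iquat \<Rightarrow> iquat" where
  "qconj q = IQ (qre q) (- qi q) (- qj q) (- qk q)"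
definition qsc :: "int \<Rightarrow> iquat \<Rightarrow> iquat" where
  "qsc c q = IQ (c * qre q) (c * qi q) (c * qj q) (c * qk q)"
definition qdvd :: "int \<Rightarrow> iquat \<Rightarrow> bool" where
  "qdvd m q = (m dvd qre q \<and> m dvd qi q \<and> m dvd qj q \<and> m dvd qk q)"
definition qdiv :: "int \<Rightarrow> iquat \<Rightarrow> iquat" where
  "qdiv m q = IQ (qre q div m) (qi q div m) (qj q div m) (qk q div m)"
definition qone :: iquat where "qone = IQ 1 0 0 0"
definition qsub :: "iquat \<Rightarrow> iquat \<Rightarrow> iquat" where
  "qsub a b = IQ (qre a - qre b) (qi a - qi b) (qj a - qj b) (qk a - qk b)"

lemmas qdefs = qmult_def qconj_def qsc_def qone_def qsub_def qnorm2_def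

lemma qmult_assoc: "qmult (qmult a b) c = qmult a (qmult b c)"
  by (simp add: qmult_def algebra_simps)

lemma qnorm2_mult: "qnorm2 (qmult a b) = qnorm2 a * qnorm2 b"
  by (simp add: qmult_def qnorm2_def power2_eq_square algebra_simps)

lemma qnorm2_sc: "qnorm2 (qsc c a) = c^2 * qnorm2 a"
  by (simp add: qsc_def qnorm2_def power2_eq_square algebra_simps)

lemma qnorm2_conj: "qnorm2 (qconj a) = qnorm2 a"
  by (simp add: qconj_def qnorm2_def)

lemma qnorm2_nonneg: "qnorm2 a \<ge> 0"
  by (simp add: qnorm2_def)

lemma qnorm2_zero: "qnorm2 a = 0 \<longleftrightarrow> a = IQ 0 0 0 0"
proof -
  have "qnorm2 a = 0 \<longleftrightarrow> qre a = 0 \<and> qi a = 0 \<and> qj a = 0 \<and> qk a = 0"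
    unfolding qnorm2_def
    by (simp add: add_nonneg_eq_0_iff)
  then show ?thesis by (cases a) auto
qed

lemma qmult_conj_left: "qmult (qconj x) x = qsc (qnorm2 x) qone"
  by (simp add: qdefs power2_eq_square algebra_simps)

lemma qmult_conj_right: "qmult x (qconj x) = qsc (qnorm2 x) qone"
  by (simp add: qdefs power2_eq_square algebra_simps)

lemma qmult_one_left[simp]: "qmult qone x = x"
  by (simp add: qdefs)
lemma qmult_one_right[simp]: "qmult x qone = x"
  by (simp add: qdefs)

lemma qmult_sc_left: "qmult (qsc c a) b = qsc c (qmult a b)"
  by (simp add: qdefs algebra_simps)
lemma qmult_sc_right: "qmult a (qsc c b) = qsc c (qmult a b)"
  by (simp add: qdefs algebra_simps)
lemma qsc_qsc: "qsc c (qsc d a) = qsc (c*d) a"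
  by (simp add: qdefs algebra_simps)
lemma qsc_one[simp]: "qsc 1 a = a"
  by (simp add: qdefs)
lemma qconj_mult: "qconj (qmult a b) = qmult (qconj b) (qconj a)"
  by (simp add: qdefs algebra_simps)
lemma qconj_sc: "qconj (qsc c a) = qsc c (qconj a)"
  by (simp add: qdefs algebra_simps)
lemma qconj_conj[simp]: "qconj (qconj a) = a"
  by (simp add: qdefs)

lemma qdiv_sc: "qdvd m q \<Longrightarrow> qsc m (qdiv m q) = q"
  by (simp add: qdvd_def qdiv_def qsc_def)

lemma qsc_inj: "c \<noteq> 0 \<Longrightarrow> qsc c a = qsc c b \<Longrightarrow> a = b"
  by (cases a; cases b) (simp add: qsc_def)

lemma qdvd_sc: "qdvd m (qsc m a)"
  by (simp add: qdvd_def qsc_def)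

lemma qdvd_mult_left: "qdvd m a \<Longrightarrow> qdvd m (qmult b a)"
  by (auto simp: qdvd_def qmult_def)
lemma qdvd_mult_right: "qdvd m a \<Longrightarrow> qdvd m (qmult a b)"
  by (auto simp: qdvd_def qmult_def)

definition goodS :: "iquat set \<Rightarrow> bool" where
  "goodS S \<longleftrightarrow> S = Zj \<or> S = Lipschitz"

lemma S_mult: "goodS S \<Longrightarrow> a \<in> S \<Longrightarrow> b \<in> S \<Longrightarrow> qmult a b \<in> S"
  by (auto simp: goodS_def Zj_def Lipschitz_def qmult_def)
lemma S_conj: "goodS S \<Longrightarrow> a \<in> S \<Longrightarrow> qconj a \<in> S"
  by (auto simp: goodS_def Zj_def Lipschitz_def qconj_def)
lemma S_sc: "goodS S \<Longrightarrow> a \<in> S \<Longrightarrow> qsc c a \<in> S"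
  by (auto simp: goodS_def Zj_def Lipschitz_def qsc_def)
lemma S_div: "goodS S \<Longrightarrow> a \<in> S \<Longrightarrow> qdiv c a \<in> S"
  by (auto simp: goodS_def Zj_def Lipschitz_def qdiv_def)
lemma S_one: "goodS S \<Longrightarrow> qone \<in> S"
  by (auto simp: goodS_def Zj_def Lipschitz_def qone_def)
lemma S_sub: "goodS S \<Longrightarrow> a \<in> S \<Longrightarrow> b \<in> S \<Longrightarrow> qsub a b \<in> S"
  by (auto simp: goodS_def Zj_def Lipschitz_def qsub_def)

lemma factor_from:
  assumes "qnorm2 x = p" "p \<noteq> 0" "qdvd p (qmult (qconj x) t)"
  shows "t = qmult x (qdiv p (qmult (qconj x) t))"
proof -
  have "qsc p (qmult x (qdiv p (qmult (qconj x) t))) = qmult x (qmult (qconj x) t)"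
    using assms by (simp add: qmult_sc_right[symmetric] qdiv_sc)
  also have "\<dots> = qsc p t"
    using assms by (simp add: qmult_assoc[symmetric] qmult_conj_right qmult_sc_left)
  finally show ?thesis using assms(2) qsc_inj by metis
qed

lemma qdvd_cancel:
  assumes "prime (p::int)" "\<not> p dvd c" "qdvd p (qsc c z)"
  shows "qdvd p z"
  using assms by (auto simp: qdvd_def qsc_def prime_dvd_mult_iff)

lemma qdvd_sub: "qdvd m a \<Longrightarrow> qdvd m b \<Longrightarrow> qdvd m (qsub a b)"
  by (auto simp: qdvd_def qsub_def)

lemma halve:
  assumes gS: "goodS S" and xS: "x \<in> S" and ev: "even (qnorm2 x)"
  shows "\<exists>s\<in>S. qnorm2 s = 2 \<and> qdvd 2 (qmult x s) \<and> qdvd 2 (qmult (qconj s) x)"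
proof -
  obtain a b c d where x: "x = IQ a b c d" by (cases x)
  have par: "even (a + b + c + d)" using ev by (simp add: x qnorm2_def)
  show ?thesis
  proof (cases "S = Zj")
    case True
    then have "b = 0" "d = 0" using xS by (simp_all add: Zj_def x)
    then show ?thesis using par True
      by (intro bexI[of _ "IQ 1 0 1 0"]) (simp_all add: x qdefs qdvd_def Zj_def even_diff)
  next
    case False
    then have L: "S = UNIV" using gS by (simp add: goodS_def Lipschitz_def)
    consider "even a = even b" "even c = even d" | "even a = even c" "even b = even d"
      | "even a = even d" "even b = even c" using par
      by (cases "even a"; cases "even b"; cases "even c"; simp)
    then show ?thesis
    proof cases
      case 1 then show ?thesis
        by (intro bexI[of _ "IQ 1 1 0 0"]) (simp_all add: x qdefs qdvd_def L even_diff)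
    next
      case 2 then show ?thesis
        by (intro bexI[of _ "IQ 1 0 1 0"]) (simp_all add: x qdefs qdvd_def L even_diff)
    next
      case 3 then show ?thesis
        by (intro bexI[of _ "IQ 1 0 0 1"]) (simp_all add: x qdefs qdvd_def L even_diff)
    qed
  qed
qed

definition red :: "int \<Rightarrow> int \<Rightarrow> int" where
  "red m z = (if 2 * (z mod m) > m then z mod m - m else z mod m)"

lemma red_dvd: "m dvd (z - red m z)"
proof -
  have h: "m dvd (z - z mod m)" by (rule dvd_minus_mod)
  have "z - (z mod m - m) = (z - z mod m) + m" by simp
  then have "m dvd (z - (z mod m - m))" using h by (simp only:) (rule dvd_add, assumption, rule dvd_refl)
  then show ?thesis using h unfolding red_def by (cases "2 * (z mod m) > m") (simp_all only: if_True if_False)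
qed

lemma red_bound: assumes "m > 0" "odd m" shows "\<bar>2 * red m z\<bar> \<le> m - 1"
proof -
  have r: "0 \<le> z mod m" "z mod m < m" using assms(1) by (rule pos_mod_sign, rule pos_mod_bound)
  have "2 * (z mod m) \<noteq> m" using assms(2) by (metis dvd_triv_left)
  show ?thesis
  proof (cases "2 * (z mod m) > m")
    case True
    then have "red m z = z mod m - m" by (simp add: red_def)
    then show ?thesis using True r by linarith
  next
    case False
    then have "red m z = z mod m" by (simp add: red_def)
    then show ?thesis using False r \<open>2 * (z mod m) \<noteq> m\<close> by linarith
  qed
qed

definition qred :: "int \<Rightarrow> iquat \<Rightarrow> iquat" where
  "qred m x = IQ (red m (qre x)) (red m (qi x)) (red m (qj x)) (red m (qk x))"

lemma qred_dvd: "qdvd m (qsub x (qred m x))"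
  by (simp add: qdvd_def qsub_def qred_def red_dvd)

lemma red_zero[simp]: "m \<ge> 0 \<Longrightarrow> red m 0 = 0"
  by (simp add: red_def)

lemma S_red: "goodS S \<Longrightarrow> m \<ge> 0 \<Longrightarrow> x \<in> S \<Longrightarrow> qred m x \<in> S"
  by (auto simp: goodS_def Zj_def Lipschitz_def qred_def)

lemma sq_bound: assumes "\<bar>2 * r\<bar> \<le> (m::int) - 1" "m > 0" shows "4 * r^2 \<le> (m - 1)^2"
proof -
  have "\<bar>2 * r\<bar> \<le> \<bar>m - 1\<bar>" using assms by simp
  then have "(2*r)^2 \<le> (m-1)^2" by (simp only: abs_le_square_iff)
  then show ?thesis by (simp add: power_mult_distrib)
qed

lemma qred_norm: assumes "m > 0" "odd m" shows "qnorm2 (qred m x) < m^2"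
proof -
  note b = sq_bound[OF red_bound[OF assms] assms(1)]
  have "4 * qnorm2 (qred m x) \<le> 4 * (m-1)^2"
    unfolding qnorm2_def qred_def
    using b[of "qre x"] b[of "qi x"] b[of "qj x"] b[of "qk x"] by simp
  moreover have "(m-1)^2 < m^2" using assms(1) by (simp add: power2_eq_square algebra_simps)
  ultimately show ?thesis by linarith
qed

lemma qsub_sc: "qsub (qsc m a) (qsc m b) = qsc m (qsub a b)"
  by (simp add: qdefs algebra_simps)

lemma qmult_conj_sub: "qmult x (qconj (qsub x z)) = qsub (qmult x (qconj x)) (qmult x (qconj z))"
  by (simp add: qdefs algebra_simps)

lemma descent:
  assumes gS: "goodS S" and tS: "t \<in> S" and p: "prime p" "odd p"
  shows "0 < m \<Longrightarrow> m < p \<Longrightarrow> x \<in> S \<Longrightarrow> qdvd p (qmult (qconj x) t) \<Longrightarrow> qnorm2 x = m * p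
    \<Longrightarrow> \<exists>u\<in>S. qnorm2 u = p \<and> qdvd p (qmult (qconj u) t)"
proof (induction "nat m" arbitrary: m x rule: less_induct)
  case (less m x)
  have p1: "p > 1" using p(1) prime_gt_1_int by blast
  have ndvd: "\<not> p dvd m" using less.prems(1,2) zdvd_not_zless by blast
  show ?case
  proof (cases "m = 1")
    case True thus ?thesis using less.prems by auto
  next
    case m1: False
    show ?thesis
    proof (cases "even m")
      case True
      have "even (qnorm2 x)" using less.prems(5) True by simp
      then obtain s where sS: "s \<in> S" and s2: "qnorm2 s = 2" and d1: "qdvd 2 (qmult x s)"
        using halve[OF gS less.prems(3)] by blast
      define x' where "x' = qdiv 2 (qmult x s)"
      have x'sc: "qsc 2 x' = qmult x s" using d1 by (simp add: x'_def qdiv_sc)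
      have "4 * qnorm2 x' = 2 * (m*p)"
        using arg_cong[OF x'sc, of qnorm2] less.prems(5) s2 by (simp add: qnorm2_sc qnorm2_mult)
      obtain m' where mm: "m = 2*m'" using True by blast
      have nx': "qnorm2 x' = m' * p" using \<open>4 * qnorm2 x' = 2 * (m*p)\<close> mm by simp
      have "qsc 2 (qmult (qconj x') t) = qmult (qconj s) (qmult (qconj x) t)"
      proof -
        have "qsc 2 (qmult (qconj x') t) = qmult (qconj (qsc 2 x')) t"
          by (simp add: qconj_sc qmult_sc_left)
        also have "\<dots> = qmult (qconj s) (qmult (qconj x) t)"
          by (simp add: x'sc qconj_mult qmult_assoc)
        finally show ?thesis .
      qed
      then have "qdvd p (qsc 2 (qmult (qconj x') t))"
        using qdvd_mult_left[OF less.prems(4)] by simp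
      moreover have "\<not> p dvd 2"
      proof
        assume "p dvd 2"
        then have "p \<le> 2" by (rule zdvd_imp_le) simp
        then have "p = 2" using p1 by simp
        then show False using p(2) by simp
      qed
      ultimately have dx': "qdvd p (qmult (qconj x') t)" using qdvd_cancel[OF p(1)] by blast
      have x'S: "x' \<in> S" unfolding x'_def by (rule S_div[OF gS S_mult[OF gS less.prems(3) sS]])
      have "0 < m'" "m' < m" using mm less.prems(1) by auto
      then show ?thesis
        using less.hyps[of m' x'] less.prems(2) x'S dx' nx' by simp
    next
      case odd: False
      have m0: "m > 0" using less.prems(1) .
      define y where "y = qred m x"
      define q where "q = qdiv m (qsub x y)"
      have xq: "qsub x y = qsc m q" by (simp add: q_def y_def qdiv_sc qred_dvd)
      have yS: "y \<in> S" unfolding y_def using S_red[OF gS _ less.prems(3)] m0 by simp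
      have qS: "q \<in> S" unfolding q_def by (rule S_div[OF gS S_sub[OF gS less.prems(3) yS]])
      have ny: "qnorm2 y < m^2" unfolding y_def using qred_norm m0 odd by blast
      have yeq: "y = qsub x (qsc m q)"
        using xq by (cases x; cases y; cases q) (simp add: qsub_def qsc_def)
      define w where "w = qsub (qsc p qone) (qmult x (qconj q))"
      have wS: "w \<in> S" unfolding w_def
        by (intro S_sub[OF gS] S_sc[OF gS] S_one[OF gS] S_mult[OF gS] less.prems(3) S_conj[OF gS] qS)
      have xy: "qmult x (qconj y) = qsc m w"
      proof -
        have "qmult x (qconj y) = qsub (qsc (m*p) qone) (qmult x (qconj (qsc m q)))"
          using less.prems(5) by (simp add: yeq qmult_conj_sub qmult_conj_right)
        also have "\<dots> = qsc m w"
          by (simp add: w_def qsub_sc[symmetric] qsc_qsc qconj_sc qmult_sc_right)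
        finally show ?thesis .
      qed
      have "qnorm2 x * qnorm2 y = m^2 * qnorm2 w"
        using arg_cong[OF xy, of qnorm2] by (simp add: qnorm2_mult qnorm2_conj qnorm2_sc)
      then have "m * (p * qnorm2 y) = m * (m * qnorm2 w)"
        using less.prems(5) by (simp add: power2_eq_square algebra_simps)
      then have pn: "p * qnorm2 y = m * qnorm2 w" using m0 by simp
      have cop: "coprime m p" using prime_imp_coprime[OF p(1) ndvd] by (simp add: coprime_commute)
      have "m dvd p * qnorm2 y" using pn by simp
      then have "m dvd qnorm2 y" using coprime_dvd_mult_right_iff[OF cop] by blast
      then obtain r where r: "qnorm2 y = m * r" by blast
      have nw: "qnorm2 w = r * p" using pn r m0 by (simp add: algebra_simps)
      have "m * r < m * m" using ny r by (simp add: power2_eq_square)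
      then have rm: "r < m" using m0 by simp
      have "r \<ge> 0" using r qnorm2_nonneg[of y] m0 by (simp add: zero_le_mult_iff)
      moreover have "r \<noteq> 0"
      proof
        assume "r = 0"
        then have "y = IQ 0 0 0 0" using r qnorm2_zero by simp
        then have "x = qsc m q" using xq by (cases x; cases q) (simp add: qsub_def qsc_def)
        then have "m * (m * qnorm2 q) = m * p" using less.prems(5)
          by (simp add: qnorm2_sc power2_eq_square)
        then have "p = m * qnorm2 q" using m0 by simp
        then have "m dvd p" by simp
        then have "m = 1 \<or> m = p" using p(1) m0 by (simp add: prime_int_iff)
        then show False using m1 less.prems(2) by simp
      qed
      ultimately have r0: "0 < r" by simp
      have "qsc m (qmult (qconj w) t) = qmult y (qmult (qconj x) t)"
      proof -
        have "qsc m (qmult (qconj w) t) = qmult (qconj (qsc m w)) t"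
          by (simp add: qconj_sc qmult_sc_left)
        also have "\<dots> = qmult y (qmult (qconj x) t)"
          by (simp add: xy[symmetric] qconj_mult qmult_assoc)
        finally show ?thesis .
      qed
      then have "qdvd p (qsc m (qmult (qconj w) t))"
        using qdvd_mult_left[OF less.prems(4)] by simp
      then have dw: "qdvd p (qmult (qconj w) t)" using qdvd_cancel[OF p(1) ndvd] by blast
      show ?thesis
        using less.hyps[of r w] r0 rm less.prems(2) wS dw nw by simp
    qed
  qed
qed

lemma qnorm2_sub_sc:
  "qnorm2 (qsub a (qsc p b)) = qnorm2 a + p * (p * qnorm2 b
     - 2 * (qre a * qre b + qi a * qi b + qj a * qj b + qk a * qk b))"
  by (simp add: qdefs power2_eq_square algebra_simps)

lemma primefac:
  assumes gS: "goodS S" and tS: "t \<in> S" and p: "prime p" and pd: "p dvd qnorm2 t"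
    and nd: "\<not> qdvd p t"
  shows "\<exists>u\<in>S. \<exists>v\<in>S. t = qmult u v \<and> qnorm2 u = p"
proof -
  have p0: "p > 0" using p prime_gt_0_int by blast
  have "\<exists>u\<in>S. qnorm2 u = p \<and> qdvd p (qmult (qconj u) t)"
  proof (cases "p = 2")
    case True
    then have "even (qnorm2 t)" using pd by simp
    then obtain s where "s \<in> S" "qnorm2 s = 2" "qdvd 2 (qmult (qconj s) t)"
      using halve[OF gS tS] by blast
    then show ?thesis using True by blast
  next
    case False
    have oddp: "odd p"
    proof
      assume "even p"
      then have "2 dvd p" by simp
      moreover have "\<forall>m. 0 \<le> m \<and> m dvd p \<longrightarrow> m = 1 \<or> m = p" using p prime_int_iff by blast
      ultimately have "(2::int) = 1 \<or> 2 = p" by (metis zero_le_numeral)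
      then show False using False by simp
    qed
    define x where "x = qred p t"
    define q where "q = qdiv p (qsub t x)"
    have xq: "qsub t x = qsc p q" by (simp add: q_def x_def qdiv_sc qred_dvd)
    have xS: "x \<in> S" unfolding x_def using S_red[OF gS _ tS] p0 by simp
    have qS: "q \<in> S" unfolding q_def by (rule S_div[OF gS S_sub[OF gS tS xS]])
    have nx: "qnorm2 x < p^2" unfolding x_def using qred_norm p0 oddp by blast
    have xeq: "x = qsub t (qsc p q)"
      using xq by (cases x; cases t; cases q) (simp add: qsub_def qsc_def)
    have "p dvd qnorm2 x" using pd unfolding xeq qnorm2_sub_sc by simp
    then obtain m where m: "qnorm2 x = m * p" by (metis dvdE mult.commute)
    have "x \<noteq> IQ 0 0 0 0"
    proof
      assume "x = IQ 0 0 0 0"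
      then have "t = qsc p q" using xq by (cases t; cases q) (simp add: qsub_def qsc_def)
      then show False using nd qdvd_sc by simp
    qed
    then have "qnorm2 x > 0" using qnorm2_zero[of x] qnorm2_nonneg[of x] by simp
    then have m0: "m > 0" using m p0 by (simp add: zero_less_mult_iff)
    have "m * p < p * p" using nx m by (simp add: power2_eq_square)
    then have mp: "m < p" using p0 by simp
    obtain k where k: "qnorm2 t = p * k" using pd by blast
    have "qmult (qconj x) t = qsub (qmult (qconj t) t) (qsc p (qmult (qconj q) t))"
      unfolding xeq by (simp add: qdefs algebra_simps)
    also have "\<dots> = qsc p (qsub (qsc k qone) (qmult (qconj q) t))"
      by (simp add: qmult_conj_left k qsc_qsc[symmetric] qsub_sc)
    finally have "qdvd p (qmult (qconj x) t)" by (simp add: qdvd_sc)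
    then show ?thesis using descent[OF gS tS p oddp m0 mp xS _ m] by blast
  qed
  then obtain u where uS: "u \<in> S" and nu: "qnorm2 u = p" and du: "qdvd p (qmult (qconj u) t)"
    by blast
  show ?thesis
    using factor_from[OF nu _ du] p0 uS
    by (intro bexI[of _ u] bexI[of _ "qdiv p (qmult (qconj u) t)"])
       (simp_all add: nu S_div[OF gS S_mult[OF gS S_conj[OF gS uS] tS]])
qed

lemma qdvd_ex: "qdvd p a \<Longrightarrow> \<exists>a'. a = qsc p a'"
  using qdiv_sc by metis

lemma step:
  assumes gS: "goodS S" and yS: "y \<in> S" and tS: "t \<in> S"
    and y1: "qnorm2 y > 1" and dv: "qnorm2 y dvd qnorm2 t"
  shows "\<exists>a\<in>S. \<exists>y1\<in>S. \<exists>t1\<in>S. t = qmult a t1 \<and> qnorm2 y = qnorm2 a * qnorm2 y1 \<and> qnorm2 a > 1"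
proof -
  have "qnorm2 y \<noteq> 0" "\<not> is_unit (qnorm2 y)" using y1 by auto
  then obtain p where pd: "p dvd qnorm2 y" and p: "prime p" using prime_divisor_exists by blast
  have p1: "p > 1" using p prime_gt_1_int by blast
  have pt: "p dvd qnorm2 t" using pd dv by (rule dvd_trans)
  have pone: "qsc p qone \<in> S" using S_sc[OF gS S_one[OF gS]] .
  have npone: "qnorm2 (qsc p qone) = p^2" by (simp add: qsc_def qone_def qnorm2_def)
  show ?thesis
  proof (cases "qdvd p y")
    case True
    then obtain y' where y': "y = qsc p y'" using qdvd_ex by blast
    have y'S: "y' \<in> S" using S_div[OF gS yS, of p] y' True qdiv_sc
      by (metis qsc_inj p1 less_irrefl zero_less_one less_trans)
    have ny: "qnorm2 y = p^2 * qnorm2 y'" using y' by (simp add: qnorm2_sc)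
    show ?thesis
    proof (cases "qdvd p t")
      case True
      then obtain t' where t': "t = qsc p t'" using qdvd_ex by blast
      have t'S: "t' \<in> S" using S_div[OF gS tS, of p] t' True qdiv_sc
        by (metis qsc_inj p1 less_irrefl zero_less_one less_trans)
      have "t = qmult (qsc p qone) t'" using t' by (simp add: qmult_sc_left)
      moreover have "p^2 > 1" using p1 by (simp add: one_less_power)
      ultimately show ?thesis using pone y'S t'S ny npone
        by (intro bexI[of _ "qsc p qone"] bexI[of _ y'] bexI[of _ t']) simp_all
    next
      case False
      obtain u v where uS: "u \<in> S" and vS: "v \<in> S" and tuv: "t = qmult u v" and nu: "qnorm2 u = p"
        using primefac[OF gS tS p pt False] by blast
      have "qnorm2 y = qnorm2 u * qnorm2 (qmult u y')"
        using ny nu by (simp add: qnorm2_mult power2_eq_square)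
      then show ?thesis using uS vS tuv nu p1 S_mult[OF gS uS y'S] by blast
    qed
  next
    case False
    obtain w y2 where wS: "w \<in> S" and y2S: "y2 \<in> S" and ywy: "y = qmult w y2" and nw: "qnorm2 w = p"
      using primefac[OF gS yS p pd False] by blast
    have ny: "qnorm2 y = qnorm2 w * qnorm2 y2" using ywy by (simp add: qnorm2_mult)
    show ?thesis
    proof (cases "qdvd p t")
      case True
      then obtain t' where t': "t = qsc p t'" using qdvd_ex by blast
      have t'S: "t' \<in> S" using S_div[OF gS tS, of p] t' True qdiv_sc
        by (metis qsc_inj p1 less_irrefl zero_less_one less_trans)
      have "t = qmult w (qmult (qconj w) t')"
        using t' nw by (simp add: qmult_assoc[symmetric] qmult_conj_right qmult_sc_left)
      then show ?thesis using wS y2S ny nw p1 S_mult[OF gS S_conj[OF gS wS] t'S] by blast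
    next
      case False
      obtain u v where uS: "u \<in> S" and vS: "v \<in> S" and tuv: "t = qmult u v" and nu: "qnorm2 u = p"
        using primefac[OF gS tS p pt False] by blast
      show ?thesis using uS vS tuv nu nw ny p1 y2S by metis
    qed
  qed
qed

lemma main_aux:
  assumes gS: "goodS S"
  shows "y \<in> S \<Longrightarrow> t \<in> S \<Longrightarrow> qnorm2 y dvd qnorm2 t \<Longrightarrow>
    \<exists>u\<in>S. \<exists>v\<in>S. t = qmult u v \<and> qnorm2 u = qnorm2 y"
proof (induction "nat (qnorm2 y)" arbitrary: y t rule: less_induct)
  case (less y t)
  consider "qnorm2 y = 0" | "qnorm2 y = 1" | "qnorm2 y > 1"
    using qnorm2_nonneg[of y] by linarith
  then show ?case
  proof cases
    case 1
    then have "qnorm2 t = 0" using less.prems(3) by simp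
    then have "t = IQ 0 0 0 0" "y = IQ 0 0 0 0" using 1 qnorm2_zero by auto
    then show ?thesis using less.prems(1) by (intro bexI[of _ y]) (auto simp: qmult_def)
  next
    case 2
    have "t = qmult y (qmult (qconj y) t)"
      using 2 by (simp add: qmult_assoc[symmetric] qmult_conj_right)
    then show ?thesis using less.prems(1,2) S_mult[OF gS S_conj[OF gS less.prems(1)] less.prems(2)]
      by blast
  next
    case 3
    obtain a y1 t1 where aS: "a \<in> S" and y1S: "y1 \<in> S" and t1S: "t1 \<in> S"
      and ta: "t = qmult a t1" and ny: "qnorm2 y = qnorm2 a * qnorm2 y1" and na: "qnorm2 a > 1"
      using step[OF gS less.prems(1,2) 3 less.prems(3)] by blast
    have "qnorm2 y1 \<ge> 0" using qnorm2_nonneg .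
    have "qnorm2 y1 \<noteq> 0" using ny 3 by auto
    then have "qnorm2 y1 > 0" using \<open>qnorm2 y1 \<ge> 0\<close> by simp
    then have "1 * qnorm2 y1 < qnorm2 a * qnorm2 y1" using na by (simp add: mult_strict_right_mono)
    then have lt: "qnorm2 y1 < qnorm2 y" using ny by simp
    have "qnorm2 a * qnorm2 y1 dvd qnorm2 a * qnorm2 t1"
      using less.prems(3) ny ta by (simp add: qnorm2_mult)
    then have d1: "qnorm2 y1 dvd qnorm2 t1" using na by simp
    have "nat (qnorm2 y1) < nat (qnorm2 y)" using lt \<open>qnorm2 y1 \<ge> 0\<close> by simp
    then obtain u2 v2 where u2S: "u2 \<in> S" and v2S: "v2 \<in> S" and t1e: "t1 = qmult u2 v2"
      and nu2: "qnorm2 u2 = qnorm2 y1"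
      using less.hyps[OF _ y1S t1S d1] by blast
    have "t = qmult (qmult a u2) v2" using ta t1e by (simp add: qmult_assoc)
    moreover have "qnorm2 (qmult a u2) = qnorm2 y" using ny nu2 by (simp add: qnorm2_mult)
    ultimately show ?thesis using S_mult[OF gS aS u2S] v2S by blast
  qed
qed

theorem mainTheorem12:
  assumes "S = Zj \<or> S = Lipschitz"
    and "y \<in> S" and "t \<in> S"
    and "qnorm2 y dvd qnorm2 t"
  shows "\<exists>u\<in>S. \<exists>v\<in>S. t = qmult u v \<and> qnorm2 u = qnorm2 y"
  using main_aux[of S y t] assms by (simp add: goodS_def)

end
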